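(* Let $X$ be a finite-dimensional real vector space, $\phi:X\to\mathbf{R}$ a strictly convex norm, $K\subseteq X$ closed, $1<\lambda<\infty$, and $K_\lambda=(X\setminus K)\cap\{x:\rho^\phi_K(x)\ge\lambda\}$. Then there exists $\omega_\lambda:\mathbf{R}\to\mathbf{R}$ with $\lim_{t\downarrow0}\omega_\lambda(t)=0$ such that $$\phi(a-b)\le\delta^\phi_K(x)\,\omega_\lambda\bigl(\phi(x-y)/\delta^\phi_K(x)\bigr)$$ for all $x\in K_\lambda$, $y\in X$, $a\in\xi^\phi_K(x)$, $b\in\xi^\phi_K(y)$.
   Context: A norm $\phi$ is strictly convex if $\phi(a+b)=\phi(a)+\phi(b)$ implies $\phi(b)a=\phi(a)b$. For closed $K$: $\delta^\phi_K(x)=\inf\{\phi(y-x):y\in K\}$; $\xi^\phi_K(x)=K\cap\{w:\phi(x-w)=\delta^\phi_K(x)\}$; $\rho^\phi_K(x)=\sup\bigl(\mathbf{R}\cap\{s:\delta^\phi_K(w+s(x-w))=s\,\delta^\phi_K(x)\}\bigr)$ for any $w\in\xi^\phi_K(x)$ (independent of the choice of $w$). *)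

theory Defs
  imports "HOL-Analysis.Analysis"
begin

definition is_norm :: "('a::real_vector \<Rightarrow> real) \<Rightarrow> bool" where
  "is_norm \<phi> \<longleftrightarrow>
     (\<forall>x. 0 \<le> \<phi> x) \<and> (\<forall>x. \<phi> x = 0 \<longleftrightarrow> x = 0) \<and>
     (\<forall>c x. \<phi> (c *\<^sub>R x) = \<bar>c\<bar> * \<phi> x) \<and>
     (\<forall>x y. \<phi> (x + y) \<le> \<phi> x + \<phi> y)"

definition strictly_convex_norm :: "('a::real_vector \<Rightarrow> real) \<Rightarrow> bool" where
  "strictly_convex_norm \<phi> \<longleftrightarrow>
     (\<forall>a b. \<phi> (a + b) = \<phi> a + \<phi> b \<longrightarrow> \<phi> b *\<^sub>R a = \<phi> a *\<^sub>R b)"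

definition dist_phi :: "('a::real_vector \<Rightarrow> real) \<Rightarrow> 'a set \<Rightarrow> 'a \<Rightarrow> real" where
  "dist_phi \<phi> K x = Inf {\<phi> (y - x) | y. y \<in> K}"

definition nearest_phi :: "('a::real_vector \<Rightarrow> real) \<Rightarrow> 'a set \<Rightarrow> 'a \<Rightarrow> 'a set" where
  "nearest_phi \<phi> K x = K \<inter> {w. \<phi> (x - w) = dist_phi \<phi> K x}"

text \<open>rho, valued in the extended reals since the supremum may be infinite;
  w is any point of nearest_phi (the paper notes independence of the choice).\<close>
definition reach_phi :: "('a::real_vector \<Rightarrow> real) \<Rightarrow> 'a set \<Rightarrow> 'a \<Rightarrow> ereal" where
  "reach_phi \<phi> K x =
     (let w = (SOME w. w \<in> nearest_phi \<phi> K x)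
      in Sup (ereal ` {s::real. dist_phi \<phi> K (w + s *\<^sub>R (x - w)) = s * dist_phi \<phi> K x}))"

end

theory Submission imports Defs begin

lemma nm_scale: "is_norm \<phi> \<Longrightarrow> \<phi> (c *\<^sub>R x) = \<bar>c\<bar> * \<phi> x" by (simp add: is_norm_def)
lemma nm_tri: "is_norm \<phi> \<Longrightarrow> \<phi> (x + y) \<le> \<phi> x + \<phi> y" by (simp add: is_norm_def)
lemma nm_nonneg: "is_norm \<phi> \<Longrightarrow> 0 \<le> \<phi> x" by (simp add: is_norm_def)
lemma nm_zero: "is_norm \<phi> \<Longrightarrow> \<phi> x = 0 \<longleftrightarrow> x = 0" by (simp add: is_norm_def)
lemma nm_minus: "is_norm \<phi> \<Longrightarrow> \<phi> (- x) = \<phi> x"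
  using nm_scale[of \<phi> "-1" x] by simp
lemma nm_commute: "is_norm \<phi> \<Longrightarrow> \<phi> (x - y) = \<phi> (y - x)"
  using nm_minus[of \<phi> "x - y"] by simp
lemma nm_tri_diff: "is_norm \<phi> \<Longrightarrow> \<phi> (x - z) \<le> \<phi> (x - y) + \<phi> (y - z)"
  using nm_tri[of \<phi> "x - y" "y - z"] by simp

lemma nm_convex: assumes N: "is_norm \<phi>" shows "convex_on UNIV \<phi>"
proof (rule convex_onI)
  fix t x y assume t: "0 < t" "t < (1::real)"
  have "\<phi> ((1 - t) *\<^sub>R x + t *\<^sub>R y) \<le> \<phi> ((1 - t) *\<^sub>R x) + \<phi> (t *\<^sub>R y)" using nm_tri[OF N] .
  also have "\<dots> = (1 - t) * \<phi> x + t * \<phi> y" using t by (simp add: nm_scale[OF N])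
  finally show "\<phi> ((1 - t) *\<^sub>R x + t *\<^sub>R y) \<le> (1 - t) * \<phi> x + t * \<phi> y" .
qed simp

lemma nm_cont: fixes \<phi> :: "'a::euclidean_space \<Rightarrow> real"
  shows "is_norm \<phi> \<Longrightarrow> continuous_on UNIV \<phi>"
  using convex_on_continuous[OF open_UNIV nm_convex] by blast

lemma nm_lower: fixes \<phi> :: "'a::euclidean_space \<Rightarrow> real"
  assumes N: "is_norm \<phi>"
  shows "\<exists>c>0. \<forall>x. c * norm x \<le> \<phi> x"
proof -
  obtain e :: 'a where e: "e \<in> Basis" using nonempty_Basis by blast
  have ne: "sphere (0::'a) 1 \<noteq> {}" using e by (auto simp: norm_Basis)
  obtain x0 where x0: "x0 \<in> sphere 0 1" "\<forall>y\<in>sphere 0 1. \<phi> x0 \<le> \<phi> y"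
    using continuous_attains_inf[OF compact_sphere ne continuous_on_subset[OF nm_cont[OF N]]] by blast
  have pos: "\<phi> x0 > 0" using x0(1) nm_nonneg[OF N, of x0] nm_zero[OF N, of x0] by auto
  have "\<phi> x0 * norm x \<le> \<phi> x" for x
  proof (cases "x = 0")
    case True then show ?thesis using nm_nonneg[OF N] by simp
  next
    case False
    have "\<phi> x0 \<le> \<phi> ((1 / norm x) *\<^sub>R x)" using x0(2) False by simp
    also have "\<dots> = \<phi> x / norm x" using nm_scale[OF N] by simp
    finally show ?thesis using False by (simp add: field_simps)
  qed
  then show ?thesis using pos by blast
qed


lemma sc_contra:
  fixes \<phi> :: "'a::real_vector \<Rightarrow> real"
  assumes N: "is_norm \<phi>" and SC: "strictly_convex_norm \<phi>" and mu: "1 < \<mu>"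
    and u: "\<phi> u = 1" and h1: "\<phi> (b - u) \<le> 1" and h2: "\<mu> \<le> \<phi> (b - \<mu> *\<^sub>R u)"
  shows "b = 0"
proof -
  define A where "A = b - u"
  define B where "B = (1 - \<mu>) *\<^sub>R u"
  have AB: "A + B = b - \<mu> *\<^sub>R u" by (simp add: A_def B_def algebra_simps)
  have phB: "\<phi> B = \<mu> - 1" using mu u by (simp add: B_def nm_scale[OF N])
  have t: "\<phi> (A + B) \<le> \<phi> A + \<phi> B" by (rule nm_tri[OF N])
  have a1: "\<phi> A \<le> 1" using h1 by (simp add: A_def)
  have a2: "\<mu> \<le> \<phi> (A + B)" using h2 by (simp only: AB)
  have phA: "\<phi> A = 1" using t a1 a2 phB by linarith
  have "\<phi> (A + B) = \<phi> A + \<phi> B" using t a2 phB phA by linarith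
  then have "\<phi> B *\<^sub>R A = \<phi> A *\<^sub>R B" using SC by (simp add: strictly_convex_norm_def)
  then have "(\<mu> - 1) *\<^sub>R A = B" by (simp add: phA phB)
  then have "(\<mu> - 1) *\<^sub>R (b - u) = (1 - \<mu>) *\<^sub>R u" by (simp add: A_def B_def)
  then have "(\<mu> - 1) *\<^sub>R b = 0" by (simp add: algebra_simps)
  then show "b = 0" using mu by simp
qed

lemma key:
  fixes \<phi> :: "'a::euclidean_space \<Rightarrow> real"
  assumes N: "is_norm \<phi>" and SC: "strictly_convex_norm \<phi>" and mu: "1 < \<mu>" and ep: "0 < \<epsilon>"
  shows "\<exists>h>0. \<forall>u b. \<phi> u = 1 \<longrightarrow> \<phi> (b - u) \<le> 1 + h \<longrightarrow> \<mu> \<le> \<phi> (b - \<mu> *\<^sub>R u) \<longrightarrow> \<phi> b < \<epsilon>"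
proof -
  define S where "S = {p::'a\<times>'a. \<phi> (fst p) = 1 \<and> \<phi> (snd p - fst p) \<le> 2 \<and>
     \<mu> \<le> \<phi> (snd p - \<mu> *\<^sub>R fst p) \<and> \<epsilon> \<le> \<phi> (snd p)}"
  have C: "continuous_on UNIV \<phi>" by (rule nm_cont[OF N])
  have C1: "continuous_on UNIV (\<lambda>p::'a\<times>'a. \<phi> (fst p))"
    by (rule continuous_on_compose2[OF C]) (auto intro!: continuous_intros)
  have C2: "continuous_on UNIV (\<lambda>p::'a\<times>'a. \<phi> (snd p - fst p))"
    by (rule continuous_on_compose2[OF C]) (auto intro!: continuous_intros)
  have C3: "continuous_on UNIV (\<lambda>p::'a\<times>'a. \<phi> (snd p - \<mu> *\<^sub>R fst p))"
    by (rule continuous_on_compose2[OF C]) (auto intro!: continuous_intros)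
  have C4: "continuous_on UNIV (\<lambda>p::'a\<times>'a. \<phi> (snd p))"
    by (rule continuous_on_compose2[OF C]) (auto intro!: continuous_intros)
  have cl: "closed S"
    unfolding S_def
    by (intro closed_Collect_conj closed_Collect_eq closed_Collect_le C1 C2 C3 C4 continuous_on_const)
  obtain c where c: "c > 0" "\<And>x. c * norm x \<le> \<phi> x" using nm_lower[OF N] by blast
  have bd: "bounded S"
  proof -
    have "norm p \<le> 4 / c" if "p \<in> S" for p
    proof -
      obtain u b where p: "p = (u, b)" by fastforce
      have "\<phi> u = 1" "\<phi> (b - u) \<le> 2" using that by (auto simp: S_def p)
      moreover have "\<phi> b \<le> \<phi> (b - u) + \<phi> u" using nm_tri[OF N, of "b - u" u] by simp
      ultimately have "c * norm u \<le> 1" "c * norm b \<le> 3" using c(2)[of u] c(2)[of b] by linarith+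
      then have "norm u \<le> 1 / c" "norm b \<le> 3 / c" using c(1) by (simp_all add: field_simps)
      moreover have "norm p \<le> norm u + norm b" unfolding p by (rule norm_Pair_le)
      ultimately show ?thesis by simp
    qed
    then show ?thesis unfolding bounded_iff by blast
  qed
  have cpt: "compact S" using cl bd by (simp add: compact_eq_bounded_closed)
  show ?thesis
  proof (cases "S = {}")
    case True
    have "\<phi> b < \<epsilon>" if "\<phi> u = 1" "\<phi> (b - u) \<le> 1 + 1" "\<mu> \<le> \<phi> (b - \<mu> *\<^sub>R u)" for u b
    proof (rule ccontr)
      assume "\<not> \<phi> b < \<epsilon>"
      then have "(u, b) \<in> S" using that by (auto simp: S_def)
      then show False using True by simp
    qed
    then show ?thesis by (intro exI[of _ 1]) auto
  next
    case False
    obtain p0 where p0: "p0 \<in> S" "\<forall>p\<in>S. \<phi> (snd p0 - fst p0) \<le> \<phi> (snd p - fst p)"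
      using continuous_attains_inf[OF cpt False continuous_on_subset[OF C2]] by blast
    define m where "m = \<phi> (snd p0 - fst p0)"
    have m1: "m > 1"
    proof (rule ccontr)
      assume "\<not> m > 1"
      then have "snd p0 = 0" using p0(1) by (intro sc_contra[OF N SC mu]) (auto simp: S_def m_def)
      then show False using p0(1) ep nm_zero[OF N, of 0] by (auto simp: S_def)
    qed
    define h where "h = min ((m - 1) / 2) 1"
    have hpos: "h > 0" using m1 by (simp add: h_def)
    have "\<phi> b < \<epsilon>" if "\<phi> u = 1" "\<phi> (b - u) \<le> 1 + h" "\<mu> \<le> \<phi> (b - \<mu> *\<^sub>R u)" for u b
    proof (rule ccontr)
      assume "\<not> \<phi> b < \<epsilon>"
      moreover have "h \<le> 1" by (simp add: h_def)
      ultimately have "(u, b) \<in> S" using that by (auto simp: S_def)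
      then have "m \<le> \<phi> (b - u)" using p0(2) by (auto simp: m_def)
      moreover have "h \<le> (m - 1) / 2" unfolding h_def by (rule min.cobounded1)
      ultimately show False using that(2) m1 by (simp add: field_simps)
    qed
    then show ?thesis using hpos by blast
  qed
qed


lemma dl:
  assumes N: "is_norm \<phi>" and k: "k \<in> K"
  shows "dist_phi \<phi> K x \<le> \<phi> (k - x)"
  unfolding dist_phi_def
proof (rule cInf_lower)
  show "\<phi> (k - x) \<in> {\<phi> (y - x) |y. y \<in> K}" using k by blast
  show "bdd_below {\<phi> (y - x) |y. y \<in> K}" using nm_nonneg[OF N] by (auto intro!: bdd_belowI[of _ 0])
qed

theorem lemma3p2:
  fixes \<phi> :: "'a::euclidean_space \<Rightarrow> real" and K :: "'a set" and lam :: real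
  assumes "is_norm \<phi>" and "strictly_convex_norm \<phi>" and "closed K" and "1 < lam"
  shows "\<exists>\<omega> :: real \<Rightarrow> real. (\<omega> \<longlongrightarrow> 0) (at_right 0) \<and>
    (\<forall>x \<in> (- K) \<inter> {x. reach_phi \<phi> K x \<ge> ereal lam}. \<forall>y a b.
       a \<in> nearest_phi \<phi> K x \<longrightarrow> b \<in> nearest_phi \<phi> K y \<longrightarrow>
       \<phi> (a - b) \<le> dist_phi \<phi> K x * \<omega> (\<phi> (x - y) / dist_phi \<phi> K x))"
proof -
  note N = assms(1) and SC = assms(2)
  define \<mu> where "\<mu> = (1 + lam) / 2"
  have mu1: "1 < \<mu>" and mulam: "\<mu> < lam" using assms(4) by (auto simp: \<mu>_def)
  define \<Omega> where "\<Omega> t = {\<phi> b | u b. \<phi> u = 1 \<and> \<phi> (b - u) \<le> 1 + 2 * t \<and> \<mu> \<le> \<phi> (b - \<mu> *\<^sub>R u)}" for t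
  define \<omega> where "\<omega> t = Sup (\<Omega> t)" for t
  have bdd: "bdd_above (\<Omega> t)" for t
  proof (rule bdd_aboveI[of _ "2 + 2 * t"])
    fix r assume "r \<in> \<Omega> t"
    then obtain u b where r: "r = \<phi> b" "\<phi> u = 1" "\<phi> (b - u) \<le> 1 + 2 * t" by (auto simp: \<Omega>_def)
    have "\<phi> b \<le> \<phi> (b - u) + \<phi> u" using nm_tri[OF N, of "b - u" u] by simp
    then show "r \<le> 2 + 2 * t" using r by linarith
  qed
  obtain e :: 'a where e: "e \<in> Basis" using nonempty_Basis by blast
  have e0: "e \<noteq> 0" using e by auto
  define u0 where "u0 = (1 / \<phi> e) *\<^sub>R e"
  have pe: "\<phi> e > 0" using e0 nm_nonneg[OF N, of e] nm_zero[OF N, of e] by auto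
  have u0: "\<phi> u0 = 1" using pe by (simp add: u0_def nm_scale[OF N])
  have nemp: "0 \<in> \<Omega> t" if "t \<ge> 0" for t
  proof -
    have "\<phi> (0 - u0) = 1" using u0 nm_minus[OF N, of u0] by simp
    moreover have "\<phi> (0 - \<mu> *\<^sub>R u0) = \<mu>" using u0 mu1 nm_minus[OF N, of "\<mu> *\<^sub>R u0"] by (simp add: nm_scale[OF N])
    ultimately have "\<phi> 0 \<in> \<Omega> t" using that u0 unfolding \<Omega>_def by force
    then show ?thesis using nm_zero[OF N, of 0] by simp
  qed
  have lim: "(\<omega> \<longlongrightarrow> 0) (at_right 0)"
  proof (rule tendstoI)
    fix \<epsilon> :: real assume ep: "\<epsilon> > 0"
    obtain h where h: "h > 0" "\<And>u b. \<phi> u = 1 \<Longrightarrow> \<phi> (b - u) \<le> 1 + h \<Longrightarrow> \<mu> \<le> \<phi> (b - \<mu> *\<^sub>R u) \<Longrightarrow> \<phi> b < \<epsilon> / 2"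
      using key[OF N SC mu1, of "\<epsilon> / 2"] ep by auto
    have "dist (\<omega> t) 0 < \<epsilon>" if t: "0 < t" "t < h / 2" for t
    proof -
      have "\<omega> t \<le> \<epsilon> / 2" unfolding \<omega>_def
      proof (rule cSup_least)
        show "\<Omega> t \<noteq> {}" using nemp[of t] t by auto
        fix r assume "r \<in> \<Omega> t"
        then obtain u b where r: "r = \<phi> b" "\<phi> u = 1" "\<phi> (b - u) \<le> 1 + 2 * t" "\<mu> \<le> \<phi> (b - \<mu> *\<^sub>R u)"
          by (auto simp: \<Omega>_def)
        have "\<phi> (b - u) \<le> 1 + h" using r(3) t by linarith
        then show "r \<le> \<epsilon> / 2" using h(2)[OF r(2) _ r(4)] r(1) by fastforce
      qed
      moreover have "0 \<le> \<omega> t" unfolding \<omega>_def using cSup_upper[OF nemp bdd] t by simp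
      ultimately show ?thesis using ep by simp
    qed
    then show "\<forall>\<^sub>F t in at_right 0. dist (\<omega> t) 0 < \<epsilon>"
      unfolding eventually_at_right_field using h(1) by (intro exI[of _ "h / 2"]) auto
  qed
  have main: "\<phi> (a - b) \<le> dist_phi \<phi> K x * \<omega> (\<phi> (x - y) / dist_phi \<phi> K x)"
    if x: "x \<notin> K" "reach_phi \<phi> K x \<ge> ereal lam" and a: "a \<in> nearest_phi \<phi> K x"
      and b: "b \<in> nearest_phi \<phi> K y" for x y a b
  proof -
    define d where "d = dist_phi \<phi> K x"
    have aK: "a \<in> K" and ad: "\<phi> (x - a) = d" using a by (auto simp: nearest_phi_def d_def)
    have bK: "b \<in> K" and bd: "\<phi> (y - b) = dist_phi \<phi> K y" using b by (auto simp: nearest_phi_def)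
    have dpos: "d > 0" using ad aK x(1) nm_nonneg[OF N, of "x - a"] nm_zero[OF N, of "x - a"] by auto
    define w0 where "w0 = (SOME w. w \<in> nearest_phi \<phi> K x)"
    have w0: "w0 \<in> nearest_phi \<phi> K x" unfolding w0_def using a by (rule someI)
    have w0K: "w0 \<in> K" and w0d: "\<phi> (x - w0) = d" using w0 by (auto simp: nearest_phi_def d_def)
    define T where "T = {s::real. dist_phi \<phi> K (w0 + s *\<^sub>R (x - w0)) = s * dist_phi \<phi> K x}"
    have r: "ereal lam \<le> Sup (ereal ` T)" using x(2) unfolding reach_phi_def Let_def T_def w0_def .
    have "ereal \<mu> < ereal lam" using mulam by simp
    then have "ereal \<mu> < Sup (ereal ` T)" using r by (rule order_less_le_trans)
    then obtain s where sT: "s \<in> T" and smu: "\<mu> < s" unfolding less_Sup_iff by auto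
    define z where "z = w0 + s *\<^sub>R (x - w0)"
    have dz: "dist_phi \<phi> K z = s * d" using sT by (simp add: T_def z_def d_def)
    have s1: "s > 1" using smu mu1 by simp
    have aw: "a = w0"
    proof -
      define A where "A = a - x"
      define B where "B = x - z"
      have AB: "A + B = a - z" by (simp add: A_def B_def)
      have phA: "\<phi> A = d" using ad nm_commute[OF N, of x a] by (simp add: A_def)
      have Beq: "B = (1 - s) *\<^sub>R (x - w0)" by (simp add: B_def z_def algebra_simps)
      then have phB: "\<phi> B = (s - 1) * d" using s1 w0d by (simp add: nm_scale[OF N])
      have t: "\<phi> (A + B) \<le> \<phi> A + \<phi> B" by (rule nm_tri[OF N])
      have ge: "s * d \<le> \<phi> (A + B)" using dl[OF N aK, of z] dz AB by simp
      have "\<phi> (A + B) = \<phi> A + \<phi> B" using t ge phA phB by (simp add: algebra_simps)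
      then have "\<phi> B *\<^sub>R A = \<phi> A *\<^sub>R B" using SC by (simp add: strictly_convex_norm_def)
      then have "((s - 1) * d) *\<^sub>R (a - x) = d *\<^sub>R ((1 - s) *\<^sub>R (x - w0))"
        using phA phB Beq by (simp add: A_def)
      then have "((s - 1) * d) *\<^sub>R (a - w0) = 0" by (simp add: algebra_simps)
      then show ?thesis using s1 dpos by simp
    qed
    define v where "v = x - a"
    define c where "c = b - a"
    define t where "t = \<phi> (x - y) / d"
    have t0: "t \<ge> 0" using dpos nm_nonneg[OF N] by (simp add: t_def)
    have pv: "\<phi> v = d" using ad by (simp add: v_def)
    have "\<phi> (c - v) \<le> \<phi> (b - y) + \<phi> (y - x)" using nm_tri_diff[OF N, of b x y] by (simp add: c_def v_def)
    moreover have "\<phi> (b - y) \<le> \<phi> (a - y)" using bd dl[OF N aK, of y] nm_commute[OF N, of y b] by simp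
    moreover have "\<phi> (a - y) \<le> \<phi> (a - x) + \<phi> (x - y)" by (rule nm_tri_diff[OF N])
    moreover have "\<phi> (a - x) = d" using ad nm_commute[OF N, of x a] by simp
    moreover have "\<phi> (y - x) = \<phi> (x - y)" by (rule nm_commute[OF N])
    ultimately have h1: "\<phi> (c - v) \<le> d + 2 * \<phi> (x - y)" by linarith
    have zz: "b - z = c - s *\<^sub>R v" by (simp add: z_def c_def v_def aw algebra_simps)
    have h2a: "s * d \<le> \<phi> (c - s *\<^sub>R v)" using dl[OF N bK, of z] dz zz by simp
    have "c - s *\<^sub>R v = (c - \<mu> *\<^sub>R v) + (- ((s - \<mu>) *\<^sub>R v))" by (simp add: algebra_simps)
    then have "\<phi> (c - s *\<^sub>R v) \<le> \<phi> (c - \<mu> *\<^sub>R v) + \<phi> (- ((s - \<mu>) *\<^sub>R v))"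
      using nm_tri[OF N] by metis
    also have "\<phi> (- ((s - \<mu>) *\<^sub>R v)) = (s - \<mu>) * d" using smu pv by (simp add: nm_minus[OF N] nm_scale[OF N])
    finally have h2: "\<mu> * d \<le> \<phi> (c - \<mu> *\<^sub>R v)" using h2a by (simp add: algebra_simps)
    define u where "u = (1 / d) *\<^sub>R v"
    define b' where "b' = (1 / d) *\<^sub>R c"
    have pu: "\<phi> u = 1" using pv dpos by (simp add: u_def nm_scale[OF N])
    have "b' - u = (1 / d) *\<^sub>R (c - v)" by (simp add: b'_def u_def algebra_simps)
    then have "\<phi> (b' - u) = \<phi> (c - v) / d" using dpos by (simp add: nm_scale[OF N])
    also have "\<dots> \<le> (d + 2 * \<phi> (x - y)) / d" using h1 dpos by (simp add: divide_right_mono)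
    also have "\<dots> = 1 + 2 * t" using dpos by (simp add: t_def field_simps)
    finally have q1: "\<phi> (b' - u) \<le> 1 + 2 * t" .
    have "b' - \<mu> *\<^sub>R u = (1 / d) *\<^sub>R (c - \<mu> *\<^sub>R v)" by (simp add: b'_def u_def algebra_simps)
    then have "\<phi> (b' - \<mu> *\<^sub>R u) = \<phi> (c - \<mu> *\<^sub>R v) / d" using dpos by (simp add: nm_scale[OF N])
    moreover have "\<mu> \<le> \<phi> (c - \<mu> *\<^sub>R v) / d" using h2 dpos by (simp add: field_simps)
    ultimately have q2: "\<mu> \<le> \<phi> (b' - \<mu> *\<^sub>R u)" by simp
    have "\<phi> b' \<in> \<Omega> t" unfolding \<Omega>_def using pu q1 q2 by blast
    then have "\<phi> b' \<le> \<omega> t" unfolding \<omega>_def by (rule cSup_upper[OF _ bdd])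
    moreover have "\<phi> b' = \<phi> c / d" using dpos by (simp add: b'_def nm_scale[OF N])
    moreover have "\<phi> (a - b) = \<phi> c" using nm_commute[OF N, of a b] by (simp add: c_def)
    ultimately have "\<phi> (a - b) \<le> d * \<omega> t" using dpos by (simp add: field_simps)
    then show ?thesis by (simp add: d_def t_def)
  qed
  show ?thesis using lim main by blast
qed

end
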